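(* The functor $X:\mathsf{ComRings}\to\mathsf{Ab}$, with the endomorphism $V$ and map $\langle\ \rangle$ described below, is a pre-Witt functor.
   Context: $\mathsf{ComRings}$ is the category of commutative rings with unity; $p$ is a fixed prime. For $R$ commutative, $R^{\mathbb N_0}$ carries the product topology; $V(r_0,r_1,\dots)=p(0,r_0,r_1,\dots)$, $\langle r\rangle=(r,r^p,r^{p^2},\dots)$, and $X(R)$ is the closed subgroup of $R^{\mathbb N_0}$ generated by $\{V^n\langle r\rangle\mid n\in\mathbb N_0, r\in R\}$, with $V$ and $\langle\ \rangle:R\to X(R)$ induced. A pre-Witt functor is a functor $F:\mathsf{ComRings}\to\mathsf{Ab}$ with functorial group endomorphisms $V:F(R)\to F(R)$ and functorial set maps $\langle\ \rangle:R\to F(R)$ such that: (1) $\langle 0\rangle=0$, and if $p\ne2$ then $\langle -x\rangle=-\langle x\rangle$; (2) $x\mapsto V\langle x^p\rangle-p\langle x\rangle$ is additive $R\to F(R)$; (3) $F(R)$ is complete with respect to the filtration $\{V^nF(R)\}_{n\ge0}$; (4) if $A$ is $p$-torsion free then $F(A)$ is $p$-torsion free. *)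

theory Defs
  imports "HOL-Analysis.Analysis"
begin

text \<open>Elements of R^N_0 are functions nat => R; group structure is pointwise.
  R carries the discrete topology, R^N_0 the product topology.\<close>

definition prodtop :: "(nat \<Rightarrow> 'a) topology" where
  "prodtop = product_topology (\<lambda>_. discrete_topology UNIV) UNIV"

definition Vop :: "nat \<Rightarrow> (nat \<Rightarrow> 'a::comm_ring_1) \<Rightarrow> (nat \<Rightarrow> 'a)" where
  "Vop p x = (\<lambda>i. if i = 0 then 0 else of_nat p * x (i - 1))"

definition teich :: "nat \<Rightarrow> 'a::comm_ring_1 \<Rightarrow> (nat \<Rightarrow> 'a)" where
  "teich p r = (\<lambda>i. r ^ (p ^ i))"

definition add_subgroup :: "(nat \<Rightarrow> 'a::comm_ring_1) set \<Rightarrow> bool" where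
  "add_subgroup H \<longleftrightarrow> (\<lambda>i. 0) \<in> H \<and> (\<forall>g\<in>H. \<forall>h\<in>H. (\<lambda>i. g i + h i) \<in> H)
     \<and> (\<forall>g\<in>H. (\<lambda>i. - g i) \<in> H)"

definition Xfun :: "nat \<Rightarrow> (nat \<Rightarrow> 'a::comm_ring_1) set" where
  "Xfun p = \<Inter>{H. add_subgroup H \<and> closedin prodtop H \<and>
                  (\<forall>n r. (Vop p ^^ n) (teich p r) \<in> H)}"

definition Xfil :: "nat \<Rightarrow> nat \<Rightarrow> (nat \<Rightarrow> 'a::comm_ring_1) set" where
  "Xfil p n = (Vop p ^^ n) ` Xfun p"

definition is_ring_hom :: "('a::comm_ring_1 \<Rightarrow> 'b::comm_ring_1) \<Rightarrow> bool" where
  "is_ring_hom f \<longleftrightarrow> f 0 = 0 \<and> f 1 = 1 \<and> (\<forall>x y. f (x + y) = f x + f y)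
     \<and> (\<forall>x y. f (x * y) = f x * f y)"

end

theory Submission
  imports Defs
begin


lemma topspace_prodtop[simp]: "topspace prodtop = UNIV"
  unfolding prodtop_def by (simp add: PiE_UNIV_domain)

lemma cont_coord: "continuous_map prodtop prodtop (\<lambda>x i. h i (x (\<sigma> i)))"
  unfolding prodtop_def continuous_map_componentwise_UNIV
proof
  fix k
  show "continuous_map (product_topology (\<lambda>_. discrete_topology UNIV) UNIV) (discrete_topology UNIV)
          (\<lambda>x. h k (x (\<sigma> k)))"
    using continuous_map_compose[OF continuous_map_product_projection[of "\<sigma> k" UNIV "\<lambda>_. discrete_topology UNIV"],
        of "discrete_topology UNIV" "h k"]
    by (simp add: o_def)
qed

lemma closed_preim: "closedin prodtop H \<Longrightarrow> closedin prodtop {x. (\<lambda>i. h i (x (\<sigma> i))) \<in> H}"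
  using closedin_continuous_map_preimage[OF cont_coord, of H h \<sigma>] by simp

lemma seq_closed:
  fixes a :: "nat \<Rightarrow> nat \<Rightarrow> 'a"
  assumes "closedin prodtop H" "\<And>m. a m \<in> H" "\<And>i. \<exists>N. \<forall>m\<ge>N. a m i = b i"
  shows "b \<in> H"
proof (rule limitin_closedin[OF _ assms(1), of a b sequentially])
  show "limitin prodtop a b sequentially"
    unfolding prodtop_def limitin_componentwise
  proof (intro conjI ballI)
    fix i
    obtain N where N: "\<forall>m\<ge>N. a m i = b i" using assms(3) by blast
    show "limitin (discrete_topology UNIV) (\<lambda>c. a c i) (b i) sequentially"
      unfolding limitin_def
      using N by (auto simp: eventually_sequentially) metis
  qed (auto simp: PiE_UNIV_domain)
qed (use assms in auto)


lemma closedin_UNIV_prodtop: "closedin prodtop UNIV"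
  using closedin_topspace[of prodtop] by simp

lemma add_subgroup_UNIV: "add_subgroup UNIV"
  by (simp add: add_subgroup_def)

lemma Xfun_least:
  assumes "add_subgroup H" "closedin prodtop H" "\<And>n r. (Vop p ^^ n) (teich p r) \<in> H"
  shows "Xfun p \<subseteq> H"
  unfolding Xfun_def using assms by blast

lemma Xfun_gen: "(Vop p ^^ n) (teich p r) \<in> Xfun p"
  unfolding Xfun_def by blast

lemma Xfun_closed: "closedin prodtop (Xfun p)"
  unfolding Xfun_def
  by (rule closedin_Inter) (use add_subgroup_UNIV closedin_UNIV_prodtop in auto)

lemma Xfun_sub: "add_subgroup (Xfun p)"
  unfolding Xfun_def add_subgroup_def by blast

lemma Xfun_0: "(\<lambda>i. 0) \<in> Xfun p"
  using Xfun_sub unfolding add_subgroup_def by blast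
lemma Xfun_add: "x \<in> Xfun p \<Longrightarrow> y \<in> Xfun p \<Longrightarrow> (\<lambda>i. x i + y i) \<in> Xfun p"
  using Xfun_sub unfolding add_subgroup_def by blast
lemma Xfun_neg: "x \<in> Xfun p \<Longrightarrow> (\<lambda>i. - x i) \<in> Xfun p"
  using Xfun_sub unfolding add_subgroup_def by blast

lemma Vop_apply: "Vop p y i = (if i = 0 then 0 else of_nat p * y (i - 1))"
  by (simp add: Vop_def)

lemma Vop_formula: "(Vop p ^^ n) x i = (if i < n then 0 else of_nat p ^ n * x (i - n))"
proof (induction n arbitrary: i)
  case 0 then show ?case by simp
next
  case (Suc n)
  have "(Vop p ^^ Suc n) x i = Vop p ((Vop p ^^ n) x) i" by simp
  also have "\<dots> = (if i < Suc n then 0 else of_nat p ^ Suc n * x (i - Suc n))"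
    unfolding Vop_apply Suc.IH by (cases i) auto
  finally show ?case .
qed

lemma Vop_add: "Vop p (\<lambda>i. x i + y i) = (\<lambda>i. Vop p x i + Vop p y i)"
  by (auto simp: Vop_def distrib_left)
lemma Vop_neg: "Vop p (\<lambda>i. - x i) = (\<lambda>i. - Vop p x i)"
  by (auto simp: Vop_def)
lemma Vop_zero: "Vop p (\<lambda>i. 0) = (\<lambda>i. 0)"
  by (auto simp: Vop_def)

lemma Vop_Xfun:
  assumes "x \<in> Xfun p" shows "Vop p x \<in> Xfun p"
proof -
  let ?h = "\<lambda>i y. if i = 0 then 0 else of_nat p * y"
  let ?s = "\<lambda>i::nat. i - 1"
  have eq: "\<And>x. Vop p x = (\<lambda>i. ?h i (x (?s i)))" by (simp add: Vop_def)
  have "Xfun p \<subseteq> {x. Vop p x \<in> Xfun p}"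
  proof (rule Xfun_least)
    show "add_subgroup {x. Vop p x \<in> Xfun p}"
      unfolding add_subgroup_def
      by (simp add: Vop_add Vop_neg Vop_zero Xfun_0 Xfun_add Xfun_neg)
  next
    show "closedin prodtop {x. Vop p x \<in> Xfun p}"
      using closed_preim[OF Xfun_closed[of p], where h="?h" and \<sigma>="?s"] by (simp add: Vop_def)
  next
    fix n r
    show "(Vop p ^^ n) (teich p r) \<in> {x. Vop p x \<in> Xfun p}"
      using Xfun_gen[where p=p and n="Suc n" and r=r] by simp
  qed
  then show ?thesis using assms by auto
qed

lemma Vopn_Xfun: "x \<in> Xfun p \<Longrightarrow> (Vop p ^^ n) x \<in> Xfun p"
  by (induction n) (auto intro: Vop_Xfun)

lemma Xfun_sum:
  assumes "finite S" "\<And>j. j \<in> S \<Longrightarrow> g j \<in> Xfun p"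
  shows "(\<lambda>i. \<Sum>j\<in>S. g j i) \<in> Xfun p"
  using assms
proof (induction S rule: finite_induct)
  case empty then show ?case by (simp add: Xfun_0)
next
  case (insert j S)
  then show ?case using Xfun_add[of "g j" p "\<lambda>i. \<Sum>j\<in>S. g j i"] by simp
qed

lemma hom_neg: "is_ring_hom f \<Longrightarrow> f (- x) = - f x"
  unfolding is_ring_hom_def by (metis add.inverse_unique add.right_inverse)
lemma hom_nat: "is_ring_hom f \<Longrightarrow> f (of_nat n) = of_nat n"
  unfolding is_ring_hom_def by (induction n) auto
lemma hom_pow: "is_ring_hom f \<Longrightarrow> f (x ^ n) = f x ^ n"
  unfolding is_ring_hom_def by (induction n) auto

lemma hom_Vop: "is_ring_hom f \<Longrightarrow> (\<lambda>i. f (Vop p x i)) = Vop p (\<lambda>i. f (x i))"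
  by (auto simp: Vop_def hom_nat is_ring_hom_def)

lemma hom_Vopn: "is_ring_hom f \<Longrightarrow> (\<lambda>i. f ((Vop p ^^ n) x i)) = (Vop p ^^ n) (\<lambda>i. f (x i))"
proof (induction n)
  case 0 then show ?case by simp
next
  case (Suc n)
  then show ?case using hom_Vop[OF Suc.prems, of p "(Vop p ^^ n) x"] by simp
qed

lemma hom_teich: "is_ring_hom f \<Longrightarrow> (\<lambda>i. f (teich p r i)) = teich p (f r)"
  by (auto simp: teich_def hom_pow)

lemma hom_Xfun:
  fixes f :: "'a::comm_ring_1 \<Rightarrow> 'b::comm_ring_1"
  assumes f: "is_ring_hom f" and x: "x \<in> Xfun p"
  shows "(\<lambda>i. f (x i)) \<in> (Xfun p :: (nat \<Rightarrow> 'b) set)"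
proof -
  have "Xfun p \<subseteq> {x. (\<lambda>i. (\<lambda>_. f) i (x (id i))) \<in> (Xfun p :: (nat \<Rightarrow> 'b) set)}"
  proof (rule Xfun_least)
    show "add_subgroup {x. (\<lambda>i. (\<lambda>_. f) i (x (id i))) \<in> (Xfun p :: (nat \<Rightarrow> 'b) set)}"
      unfolding add_subgroup_def using Xfun_0[of p] Xfun_add[of _ p] Xfun_neg[of _ p] f
      by (auto simp: hom_neg is_ring_hom_def)
  next
    show "closedin prodtop {x. (\<lambda>i. (\<lambda>_. f) i (x (id i))) \<in> (Xfun p :: (nat \<Rightarrow> 'b) set)}"
      by (rule closed_preim[OF Xfun_closed])
  next
    fix n r
    show "(Vop p ^^ n) (teich p r) \<in> {x. (\<lambda>i. (\<lambda>_. f) i (x (id i))) \<in> (Xfun p :: (nat \<Rightarrow> 'b) set)}"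
      using Xfun_gen[where p=p and n=n and r="f r"] hom_Vopn[OF f, where p=p and n=n and x="teich p r"] hom_teich[OF f, where p=p and r=r]
      by simp
  qed
  then show ?thesis using x by auto
qed


lemma complete:
  fixes a :: "nat \<Rightarrow> nat \<Rightarrow> 'a::comm_ring_1"
  assumes a: "\<forall>n. a n \<in> Xfun p" and d: "\<forall>n. (\<lambda>i. a (Suc n) i - a n i) \<in> Xfil p n"
  shows "\<exists>b\<in>Xfun p. \<forall>n. (\<lambda>i. b i - a n i) \<in> Xfil p n"
proof -
  have ex: "\<forall>n. \<exists>y. y \<in> Xfun p \<and> (Vop p ^^ n) y = (\<lambda>i. a (Suc n) i - a n i)"
    using d unfolding Xfil_def image_def by (simp add: eq_commute Bex_def)
  then obtain c where c: "\<And>n. c n \<in> Xfun p" "\<And>n. (Vop p ^^ n) (c n) = (\<lambda>i. a (Suc n) i - a n i)"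
    using choice[OF ex] by blast
  have cc: "of_nat p ^ n * c n (i - n) = a (Suc n) i - a n i" if "n \<le> i" for n i
    using fun_cong[OF c(2)[of n], of i] that by (simp add: Vop_formula)
  have cz: "a (Suc n) i = a n i" if "i < n" for n i
    using fun_cong[OF c(2)[of n], of i] that by (simp add: Vop_formula)
  have stab: "a m i = a (Suc i) i" if "Suc i \<le> m" for i m
    using that
  proof (induction m rule: dec_induct)
    case base then show ?case by simp
  next
    case (step m) then show ?case using cz[of i m] by simp
  qed
  define D where "D n = (\<lambda>i. \<Sum>j\<le>i. (Vop p ^^ j) (c (n+j)) i)" for n
  have DX: "D n \<in> Xfun p" for n
  proof (rule seq_closed[OF Xfun_closed, where a="\<lambda>m i. \<Sum>j<m. (Vop p ^^ j) (c (n+j)) i"])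
    fix m
    show "(\<lambda>i. \<Sum>j<m. (Vop p ^^ j) (c (n+j)) i) \<in> Xfun p"
      by (rule Xfun_sum) (auto intro: Vopn_Xfun c(1))
  next
    fix i
    show "\<exists>N. \<forall>m\<ge>N. (\<Sum>j<m. (Vop p ^^ j) (c (n+j)) i) = D n i"
    proof (intro exI allI impI)
      fix m assume m: "Suc i \<le> m"
      show "(\<Sum>j<m. (Vop p ^^ j) (c (n+j)) i) = D n i"
        unfolding D_def
      proof (rule sum.mono_neutral_right)
        show "{..i} \<subseteq> {..<m}" using m by auto
        show "\<forall>j\<in>{..<m} - {..i}. (Vop p ^^ j) (c (n + j)) i = 0"
          by (auto simp: Vop_formula)
      qed simp
    qed
  qed
  have VD: "(Vop p ^^ n) (D n) = (\<lambda>i. a (Suc i) i - a n i)" for n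
  proof
    fix i
    show "(Vop p ^^ n) (D n) i = a (Suc i) i - a n i"
    proof (cases "i < n")
      case True
      then show ?thesis using stab[of i n] by (simp add: Vop_formula)
    next
      case False
      have "(Vop p ^^ n) (D n) i = of_nat p ^ n * (\<Sum>j\<le>i-n. (Vop p ^^ j) (c (n+j)) (i-n))"
        using False by (simp add: Vop_formula D_def)
      also have "\<dots> = (\<Sum>j\<le>i-n. of_nat p ^ n * (of_nat p ^ j * c (n+j) (i - n - j)))"
        by (simp add: Vop_formula sum_distrib_left)
      also have "\<dots> = (\<Sum>j\<le>i-n. of_nat p ^ (n+j) * c (n+j) (i - (n + j)))"
        by (intro sum.cong refl) (simp add: power_add mult.assoc)
      also have "\<dots> = (\<Sum>j\<le>i-n. a (Suc (n+j)) i - a (n+j) i)"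
        using False by (intro sum.cong refl cc) auto
      also have "\<dots> = (\<Sum>j<Suc (i-n). a (n + Suc j) i - a (n+j) i)"
        by (simp add: lessThan_Suc_atMost)
      also have "\<dots> = a (n + Suc (i-n)) i - a (n + 0) i"
        by (rule sum_lessThan_telescope)
      also have "\<dots> = a (Suc i) i - a n i"
        using False by simp
      finally show ?thesis .
    qed
  qed
  define b where "b = (\<lambda>i. a (Suc i) i)"
  have "b = (\<lambda>i. D 0 i + a 0 i)"
    using VD[of 0] unfolding b_def by (auto simp: fun_eq_iff)
  then have "b \<in> Xfun p" using Xfun_add[OF DX[of 0] a[rule_format, of 0]] by simp
  moreover have "(\<lambda>i. b i - a n i) \<in> Xfil p n" for n
    unfolding Xfil_def b_def using VD[of n] DX[of n] by (metis image_eqI)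
  ultimately show ?thesis by blast
qed





lemma Xfil_Inter: "(\<Inter>n. Xfil p n) = {(\<lambda>i. 0::'a::comm_ring_1)}"
proof
  show "{(\<lambda>i. 0::'a)} \<subseteq> (\<Inter>n. Xfil p n)"
  proof
    fix z :: "nat \<Rightarrow> 'a" assume "z \<in> {(\<lambda>i. 0)}"
    then have z: "z = (\<lambda>i. 0)" by simp
    have h0: "(Vop p ^^ n) (\<lambda>i. 0::'a) = (\<lambda>i. 0)" for n by (auto simp: Vop_formula)
    show "z \<in> (\<Inter>n. Xfil p n)"
    proof (rule INT_I)
      fix n
      show "z \<in> Xfil p n" unfolding Xfil_def z by (rule image_eqI[where x="\<lambda>i. 0" and f="Vop p ^^ n", OF h0[of n, symmetric] Xfun_0[of p]])
    qed
  qed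
next
  show "(\<Inter>n. Xfil p n) \<subseteq> {(\<lambda>i. 0::'a)}"
  proof
    fix z :: "nat \<Rightarrow> 'a" assume z: "z \<in> (\<Inter>n. Xfil p n)"
    have "z i = 0" for i
    proof -
      from z have "z \<in> Xfil p (Suc i)" by blast
      then obtain y where "z = (Vop p ^^ Suc i) y" unfolding Xfil_def by blast
      then show ?thesis using Vop_formula[where p=p and n="Suc i" and x=y and i=i] by (simp del: funpow.simps)
    qed
    then show "z \<in> {(\<lambda>i. 0)}" by auto
  qed
qed

lemma teich_zero: "prime p \<Longrightarrow> teich p (0::'a::comm_ring_1) = (\<lambda>i. 0)"
proof -
  assume "prime p"
  then have "p ^ i > 0" for i by (simp add: prime_gt_0_nat)
  then show ?thesis unfolding teich_def by (simp add: zero_power)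
qed

lemma teich_neg: "prime p \<Longrightarrow> p \<noteq> 2 \<Longrightarrow> teich p (- x::'a::comm_ring_1) = (\<lambda>i. - teich p x i)"
proof -
  assume "prime p" "p \<noteq> 2"
  then have "2 < p" using prime_ge_2_nat[of p] by linarith
  then have "odd p" using prime_odd_nat \<open>prime p\<close> by simp
  then have "odd (p ^ i)" for i by simp
  then show ?thesis unfolding teich_def by simp
qed

lemma teich_add:
  shows "(\<lambda>i. Vop p (teich p ((x + y) ^ p)) i - of_nat p * teich p (x + y) i)
        = (\<lambda>i. (Vop p (teich p (x ^ p)) i - of_nat p * teich p x i)
             + (Vop p (teich p (y ^ p)) i - of_nat p * teich p (y::'a::comm_ring_1) i))"
proof
  fix i
  show "Vop p (teich p ((x + y) ^ p)) i - of_nat p * teich p (x + y) i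
        = (Vop p (teich p (x ^ p)) i - of_nat p * teich p x i)
             + (Vop p (teich p (y ^ p)) i - of_nat p * teich p y i)"
  proof (cases i)
    case 0 then show ?thesis by (simp add: Vop_apply teich_def algebra_simps)
  next
    case (Suc k)
    have e: "((z::'a)^p)^(p^k) = z^(p^Suc k)" for z
      by (simp only: power_mult[symmetric] power_Suc)
    show ?thesis unfolding Suc Vop_apply teich_def by (simp add: e)
  qed
qed


theorem lemma2p4:
  fixes p :: nat and f :: "'a::comm_ring_1 \<Rightarrow> 'b::comm_ring_1"
  assumes "prime p"
  shows
    \<comment> \<open>X(R) is an abelian group (pointwise), V a group endomorphism, <> lands in X(R)\<close>
    "add_subgroup (Xfun p :: (nat \<Rightarrow> 'a) set)
     \<and> (\<forall>x\<in>(Xfun p :: (nat \<Rightarrow> 'a) set). Vop p x \<in> Xfun p)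
     \<and> (\<forall>x\<in>(Xfun p :: (nat \<Rightarrow> 'a) set). \<forall>y\<in>Xfun p.
           Vop p (\<lambda>i. x i + y i) = (\<lambda>i. Vop p x i + Vop p y i))
     \<and> (\<forall>r::'a. teich p r \<in> Xfun p)
     \<comment> \<open>functoriality: a ring hom f induces a group hom X(f) commuting with V and <>\<close>
     \<and> (is_ring_hom f \<longrightarrow>
          (\<forall>x\<in>(Xfun p :: (nat \<Rightarrow> 'a) set). (\<lambda>i. f (x i)) \<in> (Xfun p :: (nat \<Rightarrow> 'b) set))
        \<and> (\<forall>x\<in>(Xfun p :: (nat \<Rightarrow> 'a) set). \<forall>y\<in>Xfun p.
              (\<lambda>i. f (x i + y i)) = (\<lambda>i. f (x i) + f (y i)))
        \<and> (\<forall>x\<in>(Xfun p :: (nat \<Rightarrow> 'a) set). (\<lambda>i. f (Vop p x i)) = Vop p (\<lambda>i. f (x i)))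
        \<and> (\<forall>r::'a. (\<lambda>i. f (teich p r i)) = teich p (f r)))
     \<comment> \<open>(1)\<close>
     \<and> teich p (0::'a) = (\<lambda>i. 0)
     \<and> (p \<noteq> 2 \<longrightarrow> (\<forall>x::'a. teich p (- x) = (\<lambda>i. - teich p x i)))
     \<comment> \<open>(2)\<close>
     \<and> (\<forall>x y::'a.
          (\<lambda>i. Vop p (teich p ((x + y) ^ p)) i - of_nat p * teich p (x + y) i)
        = (\<lambda>i. (Vop p (teich p (x ^ p)) i - of_nat p * teich p x i)
             + (Vop p (teich p (y ^ p)) i - of_nat p * teich p y i)))
     \<comment> \<open>(3) completeness (separated and complete) w.r.t. the filtration V^n X(R)\<close>
     \<and> (\<Inter>n. Xfil p n) = {(\<lambda>i. 0::'a)}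
     \<and> (\<forall>a :: nat \<Rightarrow> nat \<Rightarrow> 'a.
          (\<forall>n. a n \<in> Xfun p) \<and> (\<forall>n. (\<lambda>i. a (Suc n) i - a n i) \<in> Xfil p n)
          \<longrightarrow> (\<exists>b\<in>Xfun p. \<forall>n. (\<lambda>i. b i - a n i) \<in> Xfil p n))
     \<comment> \<open>(4)\<close>
     \<and> ((\<forall>r::'a. of_nat p * r = 0 \<longrightarrow> r = 0) \<longrightarrow>
          (\<forall>x\<in>(Xfun p :: (nat \<Rightarrow> 'a) set). (\<lambda>i. of_nat p * x i) = (\<lambda>i. 0) \<longrightarrow> x = (\<lambda>i. 0)))"
  proof -
  have h1: "\<forall>x\<in>(Xfun p :: (nat \<Rightarrow> 'a) set). Vop p x \<in> Xfun p"
    using Vop_Xfun by blast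
  have h2: "\<forall>x\<in>(Xfun p :: (nat \<Rightarrow> 'a) set). \<forall>y\<in>Xfun p.
           Vop p (\<lambda>i. x i + y i) = (\<lambda>i. Vop p x i + Vop p y i)"
    by (simp add: Vop_add)
  have h3: "\<forall>r::'a. teich p r \<in> Xfun p"
  proof
    fix r :: 'a
    show "teich p r \<in> Xfun p" using Xfun_gen[where n=0 and p=p and r=r] by simp
  qed
  have h4: "is_ring_hom f \<longrightarrow>
          (\<forall>x\<in>(Xfun p :: (nat \<Rightarrow> 'a) set). (\<lambda>i. f (x i)) \<in> (Xfun p :: (nat \<Rightarrow> 'b) set))
        \<and> (\<forall>x\<in>(Xfun p :: (nat \<Rightarrow> 'a) set). \<forall>y\<in>Xfun p.
              (\<lambda>i. f (x i + y i)) = (\<lambda>i. f (x i) + f (y i)))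
        \<and> (\<forall>x\<in>(Xfun p :: (nat \<Rightarrow> 'a) set). (\<lambda>i. f (Vop p x i)) = Vop p (\<lambda>i. f (x i)))
        \<and> (\<forall>r::'a. (\<lambda>i. f (teich p r i)) = teich p (f r))"
  proof
    assume f: "is_ring_hom f"
    show "(\<forall>x\<in>(Xfun p :: (nat \<Rightarrow> 'a) set). (\<lambda>i. f (x i)) \<in> (Xfun p :: (nat \<Rightarrow> 'b) set))
        \<and> (\<forall>x\<in>(Xfun p :: (nat \<Rightarrow> 'a) set). \<forall>y\<in>Xfun p.
              (\<lambda>i. f (x i + y i)) = (\<lambda>i. f (x i) + f (y i)))
        \<and> (\<forall>x\<in>(Xfun p :: (nat \<Rightarrow> 'a) set). (\<lambda>i. f (Vop p x i)) = Vop p (\<lambda>i. f (x i)))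
        \<and> (\<forall>r::'a. (\<lambda>i. f (teich p r i)) = teich p (f r))"
    proof (intro conjI ballI allI)
      fix x :: "nat \<Rightarrow> 'a" assume "x \<in> Xfun p"
      then show "(\<lambda>i. f (x i)) \<in> (Xfun p :: (nat \<Rightarrow> 'b) set)" using hom_Xfun[OF f] by blast
    next
      fix x y :: "nat \<Rightarrow> 'a"
      show "(\<lambda>i. f (x i + y i)) = (\<lambda>i. f (x i) + f (y i))"
        using f unfolding is_ring_hom_def by simp
    next
      fix x :: "nat \<Rightarrow> 'a"
      show "(\<lambda>i. f (Vop p x i)) = Vop p (\<lambda>i. f (x i))" by (rule hom_Vop[OF f])
    next
      fix r :: 'a
      show "(\<lambda>i. f (teich p r i)) = teich p (f r)" by (rule hom_teich[OF f])
    qed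
  qed
  have h5: "(\<forall>r::'a. of_nat p * r = 0 \<longrightarrow> r = 0) \<longrightarrow>
          (\<forall>x\<in>(Xfun p :: (nat \<Rightarrow> 'a) set). (\<lambda>i. of_nat p * x i) = (\<lambda>i. 0) \<longrightarrow> x = (\<lambda>i. 0))"
    by (auto simp: fun_eq_iff)
  have h6: "p \<noteq> 2 \<longrightarrow> (\<forall>x::'a. teich p (- x) = (\<lambda>i. - teich p x i))"
    using teich_neg[OF assms] by blast
  have h7: "\<forall>x y::'a.
          (\<lambda>i. Vop p (teich p ((x + y) ^ p)) i - of_nat p * teich p (x + y) i)
        = (\<lambda>i. (Vop p (teich p (x ^ p)) i - of_nat p * teich p x i)
             + (Vop p (teich p (y ^ p)) i - of_nat p * teich p y i))"
    using teich_add by blast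
  have h8: "\<forall>a :: nat \<Rightarrow> nat \<Rightarrow> 'a.
          (\<forall>n. a n \<in> Xfun p) \<and> (\<forall>n. (\<lambda>i. a (Suc n) i - a n i) \<in> Xfil p n)
          \<longrightarrow> (\<exists>b\<in>Xfun p. \<forall>n. (\<lambda>i. b i - a n i) \<in> Xfil p n)"
    using complete by blast
  show ?thesis
    by (intro conjI) (fact Xfun_sub h1 h2 h3 h4 teich_zero[OF assms] h6 h7 Xfil_Inter h8 h5)+
qed

end
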